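(* Let $M>0$, let $f:[0,1]\to\mathbb{R}$ satisfy $|f(x)-f(y)|\le M|x-y|$ for all $x,y\in[0,1]$, and let $g(x)=f(x)\bmod 1\in[0,1)$. Let $n\ge 2$ be an integer and $x_i=\frac{i-1}{n-1}$ for $i=1,\dots,n$. Let $\delta\in[0,1/2]$ and let $\hat g:[0,1]\to[0,1)$ satisfy $d_w(\hat g(x_i),g(x_i))\le\delta$ for all $i$. For each $i$ let $\eta_i\in[-\delta,\delta]$ be such that $\hat g(x_i)=(f(x_i)+\eta_i)\bmod 1$, and set $\hat f(x_i):=f(x_i)+\eta_i$. If $2\delta+\frac{M}{n-1}<\frac12$, then for each $i=2,\dots,n$: $$\hat f(x_i)-\hat f(x_{i-1})=\begin{cases}\hat g(x_i)-\hat g(x_{i-1}) & \text{if } |\hat g(x_i)-\hat g(x_{i-1})|<1/2,\\ 1+\hat g(x_i)-\hat g(x_{i-1}) & \text{if } \hat g(x_i)-\hat g(x_{i-1})<-1/2,\\ -1+\hat g(x_i)-\hat g(x_{i-1}) & \text{if } \hat g(x_i)-\hat g(x_{i-1})>1/2.\end{cases}$$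
   Context: For $a\in\mathbb{R}$, $a\bmod 1\in[0,1)$ denotes $a-\lfloor a\rfloor$. The wrap-around distance on $[0,1)$ is $d_w(a,b)=\min(|a-b|,1-|a-b|)$. *)

theory Defs
  imports "HOL-Analysis.Analysis"
begin

definition mod1 :: "real \<Rightarrow> real" where
  "mod1 a = a - of_int \<lfloor>a\<rfloor>"

definition dw :: "real \<Rightarrow> real \<Rightarrow> real" where
  "dw a b = min \<bar>a - b\<bar> (1 - \<bar>a - b\<bar>)"

end

theory Submission
  imports Defs
begin

theorem mainTheorem1:
  fixes M \<delta> :: real and f ghat :: "real \<Rightarrow> real" and n :: nat and eta :: "nat \<Rightarrow> real"
  defines "x \<equiv> (\<lambda>i::nat. (real i - 1) / (real n - 1))"
  defines "g \<equiv> (\<lambda>t. mod1 (f t))"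
  defines "fhat \<equiv> (\<lambda>i::nat. f (x i) + eta i)"
  assumes M_pos: "M > 0"
    and lip: "\<forall>s\<in>{0..1}. \<forall>t\<in>{0..1}. \<bar>f s - f t\<bar> \<le> M * \<bar>s - t\<bar>"
    and n_ge: "n \<ge> 2"
    and delta: "0 \<le> \<delta>" "\<delta> \<le> 1/2"
    and ghat_range: "\<forall>t\<in>{0..1}. ghat t \<in> {0..<1}"
    and ghat_close: "\<forall>i\<in>{1..n}. dw (ghat (x i)) (g (x i)) \<le> \<delta>"
    and eta_bd: "\<forall>i\<in>{1..n}. eta i \<in> {-\<delta>..\<delta>}"
    and eta_eq: "\<forall>i\<in>{1..n}. ghat (x i) = mod1 (f (x i) + eta i)"
    and small: "2 * \<delta> + M / (real n - 1) < 1/2"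
  shows "\<forall>i\<in>{2..n}.
     (\<bar>ghat (x i) - ghat (x (i - 1))\<bar> < 1/2 \<longrightarrow>
        fhat i - fhat (i - 1) = ghat (x i) - ghat (x (i - 1))) \<and>
     (ghat (x i) - ghat (x (i - 1)) < - 1/2 \<longrightarrow>
        fhat i - fhat (i - 1) = 1 + ghat (x i) - ghat (x (i - 1))) \<and>
     (ghat (x i) - ghat (x (i - 1)) > 1/2 \<longrightarrow>
        fhat i - fhat (i - 1) = -1 + ghat (x i) - ghat (x (i - 1)))"
proof
  fix i assume i: "i \<in> {2..n}"
  have n1: "real n - 1 > 0" using n_ge by simp
  have i1: "i - 1 \<in> {1..n}" "i \<in> {1..n}" using i by auto
  have ri: "real (i - 1) = real i - 1" using i by auto
  have xin: "x i \<in> {0..1}" "x (i-1) \<in> {0..1}" using i n1 i1 unfolding x_def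
    by (auto simp: field_simps ri)
  have dx: "\<bar>x i - x (i-1)\<bar> = 1 / (real n - 1)" unfolding x_def using n1
    by (simp add: diff_divide_distrib[symmetric] ri[simplified])
  have L: "\<bar>f (x i) - f (x (i-1))\<bar> \<le> M / (real n - 1)"
    using lip xin dx by (metis times_divide_eq_right mult_1_right)
  have "eta i \<in> {-\<delta>..\<delta>}" "eta (i-1) \<in> {-\<delta>..\<delta>}" using eta_bd i1 by blast+
  hence e1: "\<bar>eta i\<bar> \<le> \<delta>" "\<bar>eta (i-1)\<bar> \<le> \<delta>" by auto
  define a where "a = fhat i"
  define b where "b = fhat (i-1)"
  have ab: "\<bar>a - b\<bar> < 1/2" unfolding a_def b_def fhat_def using L e1 small by linarith
  have ga: "ghat (x i) = a - of_int \<lfloor>a\<rfloor>" using eta_eq i1 unfolding a_def fhat_def mod1_def by auto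
  have gb: "ghat (x (i-1)) = b - of_int \<lfloor>b\<rfloor>" using eta_eq i1 unfolding b_def fhat_def mod1_def by auto
  define k where "k = \<lfloor>a\<rfloor> - \<lfloor>b\<rfloor>"
  have D: "a - b = ghat (x i) - ghat (x (i-1)) + of_int k" using ga gb unfolding k_def by simp
  have r: "ghat (x i) \<in> {0..<1}" "ghat (x (i-1)) \<in> {0..<1}" using ghat_range xin by auto
  have rr: "0 \<le> ghat (x i)" "ghat (x i) < 1" "0 \<le> ghat (x (i-1))" "ghat (x (i-1)) < 1" using r by auto
  have k1: "\<bar>ghat (x i) - ghat (x (i - 1))\<bar> < 1/2 \<Longrightarrow> k = 0"
  proof -
    assume h: "\<bar>ghat (x i) - ghat (x (i - 1))\<bar> < 1/2"
    have "\<bar>real_of_int k\<bar> < 1" using h ab D by linarith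
    thus "k = 0" by linarith
  qed
  have k2: "ghat (x i) - ghat (x (i - 1)) < -1/2 \<Longrightarrow> k = 1"
  proof -
    assume h: "ghat (x i) - ghat (x (i - 1)) < -1/2"
    have "real_of_int k > 0" "real_of_int k < 2" using h ab D rr by linarith+
    thus "k = 1" by linarith
  qed
  have k3: "ghat (x i) - ghat (x (i - 1)) > 1/2 \<Longrightarrow> k = -1"
  proof -
    assume h: "ghat (x i) - ghat (x (i - 1)) > 1/2"
    have "real_of_int k < 0" "real_of_int k > -2" using h ab D rr by linarith+
    thus "k = -1" by linarith
  qed
  show "(\<bar>ghat (x i) - ghat (x (i - 1))\<bar> < 1/2 \<longrightarrow>
        fhat i - fhat (i - 1) = ghat (x i) - ghat (x (i - 1))) \<and>
     (ghat (x i) - ghat (x (i - 1)) < - 1/2 \<longrightarrow>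
        fhat i - fhat (i - 1) = 1 + ghat (x i) - ghat (x (i - 1))) \<and>
     (ghat (x i) - ghat (x (i - 1)) > 1/2 \<longrightarrow>
        fhat i - fhat (i - 1) = -1 + ghat (x i) - ghat (x (i - 1)))"
    using k1 k2 k3 D unfolding a_def b_def by auto
qed

end
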